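(* Let $\beta>0$ and let $H$ be a $3$-graph of order $n$. Let $X,Y$ be a partition of $V(H)$. Suppose that there are at most $\beta\binom{|X|}{2}\binom{|Y|}{2}$ copies of $K_4^-$ in $H$ with two vertices in $X$ and two vertices in $Y$. Then \[(|Y|-1)\,e(XXY)+(|X|-1)\,e(XYY)\le 2(1+\beta)\binom{|X|}{2}\binom{|Y|}{2}.\]
   Context: $K_4^-$ is the $3$-graph with $4$ vertices and $3$ edges; the number of copies of $K_4^-$ means the number of $4$-subsets of $V(H)$ spanning at least $3$ edges of $H$. $e(XXY)$ is the number of edges of $H$ with exactly two vertices in $X$ and one in $Y$, and $e(XYY)$ the number with one vertex in $X$ and two in $Y$. *)

theory Defs
  imports Complex_Main
begin

definition three_graph :: "'a set \<Rightarrow> 'a set set \<Rightarrow> bool" where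
  "three_graph V E \<longleftrightarrow> finite V \<and> (\<forall>e\<in>E. e \<subseteq> V \<and> card e = 3)"

definition K4minus_copies :: "'a set \<Rightarrow> 'a set set \<Rightarrow> 'a set set" where
  "K4minus_copies V E = {S. S \<subseteq> V \<and> card S = 4 \<and> card {e\<in>E. e \<subseteq> S} \<ge> 3}"

definition eXXY :: "'a set set \<Rightarrow> 'a set \<Rightarrow> 'a set \<Rightarrow> nat" where
  "eXXY E X Y = card {e\<in>E. card (e \<inter> X) = 2 \<and> card (e \<inter> Y) = 1}"

end

theory Submission
  imports Defs
begin

lemma count_ext:
  fixes V X Y :: "'a set" and e :: "'a set"
  assumes fin: "finite V" and XY: "X \<union> Y = V" "X \<inter> Y = {}"
    and eV: "e \<subseteq> V" and c2: "card (e \<inter> X) = 2" and c1: "card (e \<inter> Y) = 1"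
  shows "card {S. (S \<subseteq> V \<and> card (S \<inter> X) = 2 \<and> card (S \<inter> Y) = 2) \<and> e \<subseteq> S} = card Y - 1"
proof -
  have fY: "finite Y" and fX: "finite X" using fin XY by auto
  have fe: "finite e" using eV fin finite_subset by blast
  have "{S. (S \<subseteq> V \<and> card (S \<inter> X) = 2 \<and> card (S \<inter> Y) = 2) \<and> e \<subseteq> S} = (\<lambda>y. insert y e) ` (Y - e)"
  proof (rule set_eqI, rule iffI)
    fix S assume "S \<in> {S. (S \<subseteq> V \<and> card (S \<inter> X) = 2 \<and> card (S \<inter> Y) = 2) \<and> e \<subseteq> S}"
    hence SV: "S \<subseteq> V" and sx: "card (S \<inter> X) = 2" and sy: "card (S \<inter> Y) = 2" and eS: "e \<subseteq> S" by auto
    have fS: "finite S" using SV fin finite_subset by blast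
    have "\<not> S \<inter> Y \<subseteq> e"
    proof
      assume "S \<inter> Y \<subseteq> e"
      hence "S \<inter> Y \<subseteq> e \<inter> Y" by auto
      hence "card (S \<inter> Y) \<le> card (e \<inter> Y)" using fe by (intro card_mono) auto
      thus False using sy c1 by simp
    qed
    then obtain y where y: "y \<in> S" "y \<in> Y" "y \<notin> e" by auto
    have ex: "S \<inter> X = e \<inter> X"
      using card_subset_eq[of "S \<inter> X" "e \<inter> X"] fS eS sx c2 by auto
    have cins: "card (insert y (e \<inter> Y)) = 2" using c1 y fe by simp
    have ey: "S \<inter> Y = insert y (e \<inter> Y)"
      using card_subset_eq[of "S \<inter> Y" "insert y (e \<inter> Y)"] fS eS sy cins y by auto
    have "S = (S \<inter> X) \<union> (S \<inter> Y)" using SV XY by auto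
    also have "\<dots> = insert y e" using ex ey eV XY by auto
    finally show "S \<in> (\<lambda>y. insert y e) ` (Y - e)" using y by auto
  next
    fix S assume "S \<in> (\<lambda>y. insert y e) ` (Y - e)"
    then obtain y where y: "y \<in> Y" "y \<notin> e" and S: "S = insert y e" by auto
    have yX: "y \<notin> X" using y XY by auto
    have "S \<inter> X = e \<inter> X" using S yX by auto
    moreover have "S \<inter> Y = insert y (e \<inter> Y)" using S y by auto
    moreover have "card (insert y (e \<inter> Y)) = 2" using c1 y fe by simp
    moreover have "S \<subseteq> V" using S y eV XY by auto
    ultimately show "S \<in> {S. (S \<subseteq> V \<and> card (S \<inter> X) = 2 \<and> card (S \<inter> Y) = 2) \<and> e \<subseteq> S}"
      using c2 S by auto
  qed
  moreover have "inj_on (\<lambda>y. insert y e) (Y - e)" by (auto simp: inj_on_def)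
  moreover have "card (Y - e) = card Y - 1"
  proof -
    have "card (Y - e) = card Y - card (Y \<inter> e)" using fY by (metis card_Diff_subset_Int Diff_Int2 Int_commute Int_lower1 finite_Int inf.idem) 
    thus ?thesis using c1 by (simp add: Int_commute)
  qed
  ultimately show ?thesis by (simp add: card_image)
qed


lemma le4:
  assumes fS: "finite S" and cS: "card S = 4" and E3: "\<forall>e\<in>E. card e = 3"
  shows "card {e\<in>E. e \<subseteq> S} \<le> 4"
proof -
  have "{e\<in>E. e \<subseteq> S} \<subseteq> {e. e \<subseteq> S \<and> card e = 3}" using E3 by auto
  hence "card {e\<in>E. e \<subseteq> S} \<le> card {e. e \<subseteq> S \<and> card e = 3}"
    using fS by (intro card_mono) auto
  also have "\<dots> = 4 choose 3" using n_subsets[OF fS, of 3] cS by simp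
  also have "\<dots> = 4" by (simp add: numeral_3_eq_3 numeral_eq_Suc)
  finally show ?thesis .
qed

theorem proposition3p4:
  fixes V X Y :: "'a set" and E :: "'a set set" and \<beta> :: real
  assumes "\<beta> > 0"
    and "three_graph V E"
    and "X \<union> Y = V" and "X \<inter> Y = {}"
    and "real (card {S\<in>K4minus_copies V E. card (S \<inter> X) = 2 \<and> card (S \<inter> Y) = 2})
           \<le> \<beta> * real (card X choose 2) * real (card Y choose 2)"
  shows "(real (card Y) - 1) * real (eXXY E X Y) + (real (card X) - 1) * real (eXXY E Y X)
           \<le> 2 * (1 + \<beta>) * real (card X choose 2) * real (card Y choose 2)"
proof -
  have fin: "finite V" and EV: "\<forall>e\<in>E. e \<subseteq> V \<and> card e = 3" using assms(2) by (auto simp: three_graph_def)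
  have fX: "finite X" and fY: "finite Y" using fin assms(3) by auto
  have fE: "finite E" proof (rule finite_subset[of E "Pow V"]) show "E \<subseteq> Pow V" using EV by auto qed (use fin in auto)
  define Q where "Q = {S. S \<subseteq> V \<and> card (S \<inter> X) = 2 \<and> card (S \<inter> Y) = 2}"
  define K where "K = K4minus_copies V E"
  define F1 where "F1 = {e\<in>E. card (e \<inter> X) = 2 \<and> card (e \<inter> Y) = 1}"
  define F2 where "F2 = {e\<in>E. card (e \<inter> Y) = 2 \<and> card (e \<inter> X) = 1}"
  have fQ: "finite Q" proof (rule finite_subset[of Q "Pow V"]) show "Q \<subseteq> Pow V" unfolding Q_def by auto qed (use fin in auto)
  have fF1: "finite F1" "finite F2" unfolding F1_def F2_def using fE by auto
  have disj: "F1 \<inter> F2 = {}" unfolding F1_def F2_def by auto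
  have cS4: "card S = 4" if "S \<in> Q" for S
  proof -
    have "S = (S \<inter> X) \<union> (S \<inter> Y)" using that assms(3) unfolding Q_def by auto
    hence "card S = card (S \<inter> X) + card (S \<inter> Y)"
    proof -
      have "card ((S \<inter> X) \<union> (S \<inter> Y)) = card (S \<inter> X) + card (S \<inter> Y)"
        using fX fY assms(4) by (intro card_Un_disjoint) auto
      thus ?thesis using \<open>S = (S \<inter> X) \<union> (S \<inter> Y)\<close> by simp
    qed
    thus ?thesis using that unfolding Q_def by simp
  qed
  have fS: "finite S" if "S \<in> Q" for S using that fin unfolding Q_def by (auto intro: finite_subset)
  have s1: "(\<Sum>e\<in>F1. card {S\<in>Q. e \<subseteq> S}) = card F1 * (card Y - 1)"
  proof -
    have "(\<Sum>e\<in>F1. card {S\<in>Q. e \<subseteq> S}) = (\<Sum>e\<in>F1. card Y - 1)"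
    proof (rule sum.cong)
      fix e assume "e \<in> F1"
      hence "e \<subseteq> V" "card (e \<inter> X) = 2" "card (e \<inter> Y) = 1" using EV unfolding F1_def by auto
      from count_ext[OF fin assms(3,4) this] show "card {S\<in>Q. e \<subseteq> S} = card Y - 1"
        unfolding Q_def by simp
    qed simp
    thus ?thesis by simp
  qed
  have s2: "(\<Sum>e\<in>F2. card {S\<in>Q. e \<subseteq> S}) = card F2 * (card X - 1)"
  proof -
    have "(\<Sum>e\<in>F2. card {S\<in>Q. e \<subseteq> S}) = (\<Sum>e\<in>F2. card X - 1)"
    proof (rule sum.cong)
      fix e assume "e \<in> F2"
      hence "e \<subseteq> V" "card (e \<inter> Y) = 2" "card (e \<inter> X) = 1" using EV unfolding F2_def by auto
      from count_ext[of V Y X, OF fin _ _ this] assms(3,4)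
      have "card {S. (S \<subseteq> V \<and> card (S \<inter> Y) = 2 \<and> card (S \<inter> X) = 2) \<and> e \<subseteq> S} = card X - 1" by auto
      moreover have "{S. (S \<subseteq> V \<and> card (S \<inter> Y) = 2 \<and> card (S \<inter> X) = 2) \<and> e \<subseteq> S} = {S\<in>Q. e \<subseteq> S}"
        unfolding Q_def by auto
      ultimately show "card {S\<in>Q. e \<subseteq> S} = card X - 1" by simp
    qed simp
    thus ?thesis by simp
  qed
  have swap: "(\<Sum>e\<in>F1 \<union> F2. card {S\<in>Q. e \<subseteq> S}) = (\<Sum>S\<in>Q. card {e\<in>F1 \<union> F2. e \<subseteq> S})"
    using sum.swap_restrict[of "F1 \<union> F2" Q "\<lambda>_ _. 1::nat" "\<lambda>e S. e \<subseteq> S"] fF1 fQ by simp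
  have bound: "card {e\<in>F1 \<union> F2. e \<subseteq> S} \<le> (if S \<in> K then 4 else 2)" if "S \<in> Q" for S
  proof -
    have "card {e\<in>F1 \<union> F2. e \<subseteq> S} \<le> card {e\<in>E. e \<subseteq> S}"
      using fE unfolding F1_def F2_def by (intro card_mono) auto
    moreover have "card {e\<in>E. e \<subseteq> S} \<le> 4" using le4[OF fS[OF that] cS4[OF that]] EV by auto
    moreover have "card {e\<in>E. e \<subseteq> S} \<le> 2" if "S \<notin> K"
      using that \<open>S \<in> Q\<close> cS4[OF \<open>S \<in> Q\<close>] unfolding K_def K4minus_copies_def Q_def by auto
    ultimately show ?thesis by auto
  qed
  have "(\<Sum>S\<in>Q. card {e\<in>F1 \<union> F2. e \<subseteq> S}) \<le> (\<Sum>S\<in>Q. (if S \<in> K then 4 else 2))"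
    using bound by (intro sum_mono) auto
  also have "\<dots> = (\<Sum>S\<in>Q. 2 + (if S \<in> K then 2 else 0))" by (intro sum.cong) auto
  also have "\<dots> = 2 * card Q + 2 * card (Q \<inter> K)"
  proof -
    have "(\<Sum>S\<in>Q. (if S \<in> K then 2 else 0::nat)) = (\<Sum>S\<in>Q \<inter> K. 2)"
      using sum.inter_filter[OF fQ, of "\<lambda>_. 2::nat" "\<lambda>S. S \<in> K"] by (simp add: Int_def)
    moreover have "(\<Sum>S\<in>Q. 2 + (if S \<in> K then 2 else 0::nat)) = (\<Sum>S\<in>Q. 2) + (\<Sum>S\<in>Q. (if S \<in> K then 2 else 0::nat))"
      by (rule sum.distrib)
    ultimately show ?thesis by simp
  qed
  finally have main: "card F1 * (card Y - 1) + card F2 * (card X - 1) \<le> 2 * card Q + 2 * card (Q \<inter> K)"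
    using s1 s2 swap sum.union_disjoint[OF fF1 disj, of "\<lambda>e. card {S\<in>Q. e \<subseteq> S}"] by simp
  have QK: "Q \<inter> K = {S\<in>K4minus_copies V E. card (S \<inter> X) = 2 \<and> card (S \<inter> Y) = 2}"
    unfolding Q_def K_def K4minus_copies_def by auto
  have cQ: "card Q = (card X choose 2) * (card Y choose 2)"
  proof -
    let ?A = "{A. A \<subseteq> X \<and> card A = 2}" and ?B = "{B. B \<subseteq> Y \<and> card B = 2}"
    have img: "Q = (\<lambda>(A,B). A \<union> B) ` (?A \<times> ?B)"
    proof (rule set_eqI, rule iffI)
      fix S assume "S \<in> Q"
      hence "S = (S \<inter> X) \<union> (S \<inter> Y)" "S \<inter> X \<in> ?A" "S \<inter> Y \<in> ?B" using assms(3) unfolding Q_def by auto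
      thus "S \<in> (\<lambda>(A,B). A \<union> B) ` (?A \<times> ?B)" by (intro image_eqI[where x="(S \<inter> X, S \<inter> Y)"]) auto
    next
      fix S assume "S \<in> (\<lambda>(A,B). A \<union> B) ` (?A \<times> ?B)"
      then obtain A B where AB: "A \<subseteq> X" "card A = 2" "B \<subseteq> Y" "card B = 2" "S = A \<union> B" by auto
      have "S \<inter> X = A" "S \<inter> Y = B" using AB assms(4) by auto
      thus "S \<in> Q" using AB assms(3) unfolding Q_def by auto
    qed
    have inj: "inj_on (\<lambda>(A,B). A \<union> B) (?A \<times> ?B)"
    proof (rule inj_onI, clarify)
      fix A B A' B' assume h: "A \<subseteq> X" "B \<subseteq> Y" "A' \<subseteq> X" "B' \<subseteq> Y" "A \<union> B = A' \<union> B'"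
      have "A = (A \<union> B) \<inter> X" "A' = (A' \<union> B') \<inter> X" "B = (A \<union> B) \<inter> Y" "B' = (A' \<union> B') \<inter> Y"
        using h assms(4) by auto
      thus "A = A' \<and> B = B'" using h(5) by simp
    qed
    have "card Q = card (?A \<times> ?B)" using card_image[OF inj] img by simp
    also have "\<dots> = card ?A * card ?B" by (rule card_cartesian_product)
    also have "\<dots> = (card X choose 2) * (card Y choose 2)" using n_subsets[OF fX] n_subsets[OF fY] by simp
    finally show ?thesis .
  qed
  have e1: "eXXY E X Y = card F1" unfolding eXXY_def F1_def by simp
  have e2: "eXXY E Y X = card F2" unfolding eXXY_def F2_def by simp
  have r1: "(real (card Y) - 1) * real (card F1) \<le> real (card F1 * (card Y - 1))"
    by (cases "card Y") (auto simp: algebra_simps)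
  have r2: "(real (card X) - 1) * real (card F2) \<le> real (card F2 * (card X - 1))"
    by (cases "card X") (auto simp: algebra_simps)
  have "real (card F1 * (card Y - 1)) + real (card F2 * (card X - 1)) \<le> 2 * real (card Q) + 2 * real (card (Q \<inter> K))"
  proof -
    have "real (card F1 * (card Y - 1) + card F2 * (card X - 1)) \<le> real (2 * card Q + 2 * card (Q \<inter> K))"
      using main of_nat_le_iff by blast
    thus ?thesis by simp
  qed
  hence "(real (card Y) - 1) * real (eXXY E X Y) + (real (card X) - 1) * real (eXXY E Y X)
     \<le> 2 * real (card Q) + 2 * real (card (Q \<inter> K))"
    unfolding e1 e2 by (rule order.trans[OF add_mono[OF r1 r2]])
  also have "\<dots> \<le> 2 * real (card Q) + 2 * (\<beta> * real (card X choose 2) * real (card Y choose 2))"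
    using assms(5) QK by simp
  also have "\<dots> = 2 * (1 + \<beta>) * real (card X choose 2) * real (card Y choose 2)"
    using cQ by (simp add: algebra_simps)
  finally show ?thesis .
qed

end
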